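(* If $\nu>-1$ and $a,b\in[0,j_{\nu+1,1}]$, then $$|\mathcal{J}_\nu(a)-\mathcal{J}_\nu(b)|\ge |a-b|\sqrt{\mathcal{J}_\nu'(a)\,\mathcal{J}_\nu'(b)}.$$
   Context: For $\nu>-1$ define $\mathcal{J}_\nu:\mathbb{R}\to(-\infty,1]$ by $\mathcal{J}_\nu(x)=\sum_{n\ge0}\frac{(-1/4)^n}{(\nu+1)_n\, n!}x^{2n}$, equivalently $\mathcal{J}_\nu(x)=2^\nu\Gamma(\nu+1)x^{-\nu}J_\nu(x)$ for $x>0$, where $J_\nu$ is the Bessel function of the first kind and $(a)_n$ is the Pochhammer symbol. $j_{\mu,1}$ denotes the first positive zero of $J_\mu$. *)

theory Defs
  imports "HOL-Analysis.Analysis"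
begin

definition normBessel :: "real \<Rightarrow> real \<Rightarrow> real" where
  "normBessel nu x = (\<Sum>n. (-1/4) ^ n / (pochhammer (nu + 1) n * fact n) * x ^ (2 * n))"

definition besselJ :: "real \<Rightarrow> real \<Rightarrow> real" where
  "besselJ mu x = (\<Sum>n. (-1) ^ n / (fact n * Gamma (real n + mu + 1)) * (x / 2) powr (2 * real n + mu))"

definition first_bessel_zero :: "real \<Rightarrow> real" where
  "first_bessel_zero mu = Inf {x. x > 0 \<and> besselJ mu x = 0}"

end

theory Submission
  imports Defs
begin


definition Ac :: "real \<Rightarrow> nat \<Rightarrow> real" where
  "Ac t n = (-1/4) ^ n / (pochhammer t n * fact n)"

definition FF :: "real \<Rightarrow> real \<Rightarrow> real" where
  "FF t y = (\<Sum>n. Ac t n * y ^ n)"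

definition JJ :: "real \<Rightarrow> real \<Rightarrow> real" where
  "JJ t x = FF t (x^2)"

lemma normBessel_JJ: "normBessel nu x = JJ (nu + 1) x"
  unfolding normBessel_def JJ_def FF_def Ac_def by (simp add: power_mult)

lemma alg: fixes q t P p1 m F :: real
  assumes h: "p1*(t+1+m) = (t+1)*P" and "t>0" "P>0" "p1>0" "m\<ge>0" "F>0"
  shows "-q/(4*(t+1)*P*((m+1)*F)) - q/(P*F)/(4*t*(t+1)) = -q/(4*t*p1*((m+1)*F))"
proof -
  have nz: "t+1+m \<noteq> 0" "m+1 \<noteq> 0" "t+1\<noteq>0" using assms by auto
  have e: "4*q*(t+1)*(p1*(t+1+m)) = 4*q*(t+1)*((t+1)*P)" using h by simp
  show ?thesis using assms nz apply (simp add: divide_simps)  using h by algebra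
qed

lemma poch_ge: fixes t :: real assumes "t > 0" shows "pochhammer t n \<ge> min t 1"
proof (induction n)
  case 0 then show ?case by (auto simp: min_def)
next
  case (Suc n)
  show ?case
  proof (cases n)
    case 0 then show ?thesis by simp
  next
    case (Suc m)
    have "min t 1 > 0" using assms by simp
    hence p: "pochhammer t n \<ge> min t 1" "pochhammer t n > 0" using Suc.IH by auto
    have "t + real n \<ge> 1" using Suc assms by simp
    hence "pochhammer t n * (t + real n) \<ge> min t 1 * 1"
      using p by (intro mult_mono) auto
    thus ?thesis by (simp add: pochhammer_Suc)
  qed
qed

lemma summable_Ac: assumes "t > 0" shows "summable (\<lambda>n. Ac t n * y ^ n)"
proof (rule summable_comparison_test')
  let ?m = "min t 1"
  have m: "?m > 0" using assms by simp
  show "summable (\<lambda>n. (inverse (fact n) * (\<bar>y\<bar>/4)^n) / ?m)"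
    by (intro summable_divide summable_exp)
  show "norm (Ac t n * y ^ n) \<le> inverse (fact n) * (\<bar>y\<bar>/4)^n / ?m" for n
  proof -
    have pp: "pochhammer t n \<ge> ?m" using poch_ge[OF assms] .
    have "norm (Ac t n * y ^ n) = (\<bar>y\<bar>/4)^n / (pochhammer t n * fact n)"
      using pp m unfolding Ac_def
      by (simp add: abs_mult power_abs abs_divide power_divide abs_of_pos)
    also have "\<dots> \<le> (\<bar>y\<bar>/4)^n / (?m * fact n)"
      using pp m by (intro divide_left_mono mult_right_mono mult_pos_pos) auto
    also have "\<dots> = inverse (fact n) * (\<bar>y\<bar>/4)^n / ?m" by (simp add: field_simps)
    finally show ?thesis .
  qed
qed

lemma diffs_Ac: assumes "t > 0" shows "diffs (Ac t) n = -1/(4*t) * Ac (t+1) n"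
proof -
  have p: "pochhammer (t+1) n > 0" using assms by (intro pochhammer_pos) auto
  have f: "fact (Suc n) = (1 + real n) * (fact n :: real)" by (simp add: fact_Suc)
  have c: "x * y / (a * (x * b)) = y / (a * b)" if "x \<noteq> 0" for x y a b :: real
    using that by (simp add: divide_simps)
  have "diffs (Ac t) n = (1 + real n) * (-1/4) ^ Suc n / ((t * pochhammer (t+1) n) * ((1 + real n) * fact n))"
    unfolding diffs_def Ac_def pochhammer_rec f by (simp add: mult_ac)
  also have "\<dots> = (-1/4) ^ Suc n / ((t * pochhammer (t+1) n) * fact n)"
    by (rule c) simp
  also have "\<dots> = -1/(4*t) * Ac (t+1) n"
    unfolding Ac_def using assms p by (simp add: power_Suc field_simps)
  finally show ?thesis .
qed

lemma DERIV_FF: assumes "t > 0" shows "DERIV (FF t) y :> -1/(4*t) * FF (t+1) y"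
proof -
  have "DERIV (FF t) y :> (\<Sum>n. diffs (Ac t) n * y^n)"
    unfolding FF_def by (rule termdiffs_strong_converges_everywhere[OF summable_Ac[OF assms]])
  also have "(\<Sum>n. diffs (Ac t) n * y^n) = (\<Sum>n. -1/(4*t) * (Ac (t+1) n * y^n))"
    by (simp only: diffs_Ac[OF assms] mult.assoc)
  also have "\<dots> = -1/(4*t) * FF (t+1) y"
    unfolding FF_def using summable_Ac[of "t+1" y] assms
    by (intro sums_unique[symmetric] sums_mult summable_sums) auto
  finally show ?thesis .
qed

lemma DERIV_JJ: assumes "t > 0" shows "DERIV (JJ t) x :> -x/(2*t) * JJ (t+1) x"
proof -
  have "DERIV (\<lambda>x. FF t (x^2)) x :> -1/(4*t) * FF (t+1) (x^2) * (2 * x)"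
    by (rule DERIV_chain2[OF DERIV_FF[OF assms]]) (auto intro!: derivative_eq_intros)
  thus ?thesis unfolding JJ_def by (simp add: field_simps)
qed

lemma cont_JJ: "t > 0 \<Longrightarrow> isCont (JJ t) x"
  using DERIV_JJ DERIV_isCont by blast

lemma JJ_0: "JJ t 0 = 1"
proof -
  have "FF t 0 = (\<Sum>n. if n = 0 then 1 else 0)"
    unfolding FF_def Ac_def by (intro arg_cong[where f=suminf]) (auto simp: fun_eq_iff)
  also have "\<dots> = 1" using sums_single[of 0 "\<lambda>_. 1::real"] by (simp add: sums_iff)
  finally show ?thesis unfolding JJ_def by simp
qed

lemma contig: assumes "t > 0"
  shows "JJ t x = JJ (t+1) x - x^2/(4*t*(t+1)) * JJ (t+2) x"
proof -
  define y where "y = x^2"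
  have s0: "(\<lambda>n. Ac (t+2) n * y^n) sums FF (t+2) y"
    unfolding FF_def using summable_Ac[of "t+2" y] assms by (simp add: summable_sums)
  have "(\<lambda>n. y * (Ac (t+2) n * y^n)) sums (y * FF (t+2) y)"
    by (rule sums_mult[OF s0])
  hence "(\<lambda>n. (\<lambda>n. if n = 0 then 0 else Ac (t+2) (n-1) * y^n) (Suc n)) sums (y * FF (t+2) y)"
    by (simp add: mult_ac)
  hence s1: "(\<lambda>n. if n = 0 then 0 else Ac (t+2) (n-1) * y^n) sums (y * FF (t+2) y)"
    by (subst (asm) sums_Suc_iff) simp
  have s2: "(\<lambda>n. Ac (t+1) n * y^n) sums FF (t+1) y"
    unfolding FF_def using summable_Ac[of "t+1" y] assms by (simp add: summable_sums)
  have s3: "(\<lambda>n. Ac (t+1) n * y^n - (if n = 0 then 0 else Ac (t+2) (n-1) * y^n) / (4*t*(t+1)))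
      sums (FF (t+1) y - y * FF (t+2) y / (4*t*(t+1)))"
    by (intro sums_diff s2 sums_divide s1)
  have coef: "Ac (t+1) n * y^n - (if n = 0 then 0 else Ac (t+2) (n-1) * y^n) / (4*t*(t+1))
        = Ac t n * y^n" for n
  proof (cases n)
    case 0 then show ?thesis by (simp add: Ac_def)
  next
    case (Suc m)
    define P where "P = pochhammer (t+2) m"
    have P: "P > 0" unfolding P_def using assms by (intro pochhammer_pos) auto
    have q1: "pochhammer (t+1) m * (t + 1 + real m) = (t+1) * P"
      using pochhammer_Suc[of "t+1" m] pochhammer_rec[of "t+1" m] unfolding P_def
      by (simp add: add.commute add.left_commute)
    have q2: "pochhammer (t+1) (Suc m) = (t+1) * P"
      using pochhammer_rec[of "t+1" m] unfolding P_def by (simp add: add_ac)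
    have pm: "pochhammer (t+1) m > 0" using assms by (intro pochhammer_pos) auto
    have q3: "pochhammer t (Suc m) = t * pochhammer (t+1) m" by (simp add: pochhammer_rec)
    have q4: "pochhammer (t+1) m = (t+1) * P / (t + 1 + real m)"
      using q1 assms by (simp add: field_simps)
    have f: "fact (Suc m) = (real m + 1) * (fact m :: real)" by (simp add: fact_Suc)
    have "Ac (t+1) (Suc m) - Ac (t+2) m / (4*t*(t+1)) = Ac t (Suc m)"
      unfolding Ac_def q2 q3 f power_Suc P_def[symmetric]
      using alg[OF q1 assms P pm of_nat_0_le_iff fact_gt_zero[of m], where q="(-1/4)^m"] by (simp add: algebra_simps)
    hence "(Ac (t+1) (Suc m) - Ac (t+2) m / (4*t*(t+1))) * y^n = Ac t (Suc m) * y^n" by simp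
    thus ?thesis unfolding Suc by (simp add: algebra_simps diff_divide_distrib)
  qed
  have "(\<lambda>n. Ac t n * y^n) sums (FF (t+1) y - y * FF (t+2) y / (4*t*(t+1)))"
    using s3 coef by simp
  hence "FF t y = FF (t+1) y - y * FF (t+2) y / (4*t*(t+1))"
    unfolding FF_def by (simp add: sums_iff)
  thus ?thesis unfolding JJ_def y_def by simp
qed



lemma besselJ_JJ: assumes t: "t > 0" and x: "x > 0"
  shows "besselJ t x = (x/2) powr t / Gamma (t+1) * JJ (t+1) x"
proof -
  define C where "C = (x/2) powr t / Gamma (t+1)"
  have tm: "(-1) ^ n / (fact n * Gamma (real n + t + 1)) * (x / 2) powr (2 * real n + t)
        = C * (Ac (t+1) n * (x^2)^n)" for n
  proof -
    have nI: "t + 1 \<notin> \<int>\<^sub>\<le>\<^sub>0" using t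
      by (metis add_pos_pos linorder_not_le nonpos_Ints_nonpos zero_less_one)
    have G: "Gamma (real n + t + 1) = Gamma (t+1) * pochhammer (t+1) n"
    proof -
      have g: "Gamma (t+1) \<noteq> 0" using t by (intro less_imp_neq[symmetric] Gamma_real_pos) simp
      show ?thesis using pochhammer_Gamma[OF nI, of n] g by (simp add: field_simps add_ac)
    qed
    have pw: "(x/2) powr (2 * real n + t) = (x/2)^(2*n) * (x/2) powr t"
      using x by (simp add: powr_add powr_realpow[symmetric])
    have gp: "Gamma (t+1) > 0" "pochhammer (t+1) n > 0" using t by (auto intro: pochhammer_pos)
    have "(x/2)^(2*n) = (x^2)^n / 4^n" by (simp add: power_mult power_divide)
    moreover have "(-1::real)^n / 4^n = (-1/4)^n" by (induct n) auto
    ultimately show ?thesis unfolding G pw C_def Ac_def using gp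
      by (simp add: field_simps)
  qed
  have "besselJ t x = (\<Sum>n. C * (Ac (t+1) n * (x^2)^n))"
    unfolding besselJ_def tm ..
  also have "\<dots> = C * JJ (t+1) x"
    unfolding JJ_def FF_def using summable_Ac[of "t+1" "x^2"] t by (simp add: suminf_mult)
  finally show ?thesis unfolding C_def .
qed

lemma besselJ_zero_iff: assumes "t > 0" "x > 0"
  shows "besselJ t x = 0 \<longleftrightarrow> JJ (t+1) x = 0"
proof -
  have g: "Gamma (t+1) > 0" using assms by (intro Gamma_real_pos) simp
  hence g': "Gamma (t+1) \<noteq> 0" by linarith
  have p: "(x/2) powr t \<noteq> 0" using assms by simp
  have "besselJ t x = 0 \<longleftrightarrow> (x/2) powr t * JJ (t+1) x / Gamma (t+1) = 0"
    using besselJ_JJ[OF assms] by simp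
  also have "\<dots> \<longleftrightarrow> JJ (t+1) x = 0" using g' p by (metis divide_eq_0_iff mult_eq_0_iff)
  finally show ?thesis .
qed



lemma alg_R: fixes c d x U W Z A0 A1 :: real
  assumes "c \<noteq> 0" "U = W - c*d*x^2*Z" "A1 = A0 * x"
  shows "(1/c) * A0 * W + A1 * (-d*x*Z) = (1/c) * A0 * U"
  using assms by (simp add: field_simps power2_eq_square) algebra

lemma alg_K: fixes c d x U W Z A0 A1 p :: real
  assumes "c \<noteq> 0" "U = W - c*d*x^2*Z" "A1 = A0 * x" "p = (1-c)/c"
  shows "p*A0*((1-c)*U*W - U^2 - c^2*x^2*W^2)
     + A1*((1-c)*((-c*x*W)*W + U*(-d*x*Z)) - 2*U*(-c*x*W) - c^2*(2*x*W^2 + x^2*(2*W*(-d*x*Z))))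
     = -(1-c)*A0*U*W"
  using assms by (simp add: field_simps power2_eq_square) algebra

lemma alg_r: fixes c d x U W Z :: real
  assumes "c \<noteq> 0" "U \<noteq> 0" "U = W - c*d*x^2*Z"
  shows "((W + x*(-d*x*Z))*U - x*W*(-c*x*W))/U^2 = -((1-c)*U*W - U^2 - c^2*x^2*W^2)/(c*U^2)"
  using assms by (simp add: field_simps power2_eq_square) algebra



lemma du: "t0 > 0 \<Longrightarrow> DERIV (JJ (t0+1)) x :> -(1/(2*(t0+1)))*x*JJ (t0+2) x"
  using DERIV_JJ[of "t0+1" x] by (simp add: add.assoc)

lemma dw: "t0 > 0 \<Longrightarrow> DERIV (JJ (t0+2)) x :> -(1/(2*(t0+2)))*x*JJ (t0+3) x"
  using DERIV_JJ[of "t0+2" x] by (simp add: add.assoc)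

lemma df: "t0 > 0 \<Longrightarrow> DERIV (JJ t0) x :> -(1/(2*t0))*x*JJ (t0+1) x"
  using DERIV_JJ[of "t0" x] by simp

lemma ct: "t0 > 0 \<Longrightarrow> JJ (t0+1) x = JJ (t0+2) x - (1/(2*(t0+1)))*(1/(2*(t0+2)))*x^2*JJ (t0+3) x"
  using contig[of "t0+1" x] by (simp add: add.assoc field_simps)

lemma pos_before_zero:
  fixes g :: "real \<Rightarrow> real"
  assumes cont: "\<And>x. isCont g x" and g0: "g 0 = 1" and nz: "\<And>z. 0 < z \<Longrightarrow> z < j \<Longrightarrow> g z \<noteq> 0"
  shows "0 \<le> x \<Longrightarrow> x < j \<Longrightarrow> g x > 0" and "0 \<le> x \<Longrightarrow> x \<le> j \<Longrightarrow> g x \<ge> 0"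
proof -
  have co: "continuous_on {0..x} g" by (intro continuous_at_imp_continuous_on) (auto intro: cont)
  show "g x > 0" if h: "0 \<le> x" "x < j"
  proof (rule ccontr)
    assume "\<not> g x > 0"
    hence "g x \<le> 0" by simp
    then obtain y where y: "0 \<le> y" "y \<le> x" "g y = 0"
      using IVT2'[of g x 0 0, OF _ _ _ co] h g0 by auto
    have "y \<noteq> 0" using y g0 by auto
    thus False using nz[of y] y h by auto
  qed
  show "g x \<ge> 0" if h: "0 \<le> x" "x \<le> j"
  proof (rule ccontr)
    assume "\<not> g x \<ge> 0"
    hence gx: "g x < 0" by simp
    then obtain y where y: "0 \<le> y" "y \<le> x" "g y = 0"
      using IVT2'[of g x 0 0, OF _ _ _ co] h g0 by auto
    have "y \<noteq> 0" "y \<noteq> x" using y g0 gx by auto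
    thus False using nz[of y] y h by auto
  qed
qed

lemma nozero_first: assumes "t0 > 0" "0 < z" "z < first_bessel_zero t0"
  shows "JJ (t0+1) z \<noteq> 0"
proof
  assume "JJ (t0+1) z = 0"
  hence zin: "z \<in> {x. x > 0 \<and> besselJ t0 x = 0}" using besselJ_zero_iff[of t0 z] assms by auto
  have "bdd_below {x. x > 0 \<and> besselJ t0 x = (0::real)}" by (rule bdd_belowI[of _ 0]) auto
  hence "first_bessel_zero t0 \<le> z" unfolding first_bessel_zero_def using zin by (rule cInf_lower[rotated])
  thus False using assms by simp
qed

lemma lim_powr_mult:
  assumes "q > 0" "isCont h 0"
  shows "((\<lambda>s. s powr q * h s) \<longlongrightarrow> 0) (at_right (0::real))"
proof -
  have "((\<lambda>s. s powr q) \<longlongrightarrow> 0) (at_right (0::real))"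
    by (rule tendsto_zero_powrI[of _ _ "\<lambda>_. q" q]) (auto intro!: tendsto_ident_at eventually_at_rightI[of 0 1] simp: assms)
  moreover have "(h \<longlongrightarrow> h 0) (at_right 0)"
    using assms(2) by (simp add: isCont_def filterlim_at_split)
  ultimately have "((\<lambda>s. s powr q * h s) \<longlongrightarrow> 0 * h 0) (at_right 0)" by (rule tendsto_mult)
  thus ?thesis by simp
qed



lemma upos: assumes "t0 > 0" "0 \<le> x" "x < first_bessel_zero t0" shows "JJ (t0+1) x > 0"
  using pos_before_zero(1)[of "JJ (t0+1)" "first_bessel_zero t0" x] assms
    cont_JJ[of "t0+1"] JJ_0 nozero_first[of t0] by auto

lemma unn: assumes "t0 > 0" "0 \<le> x" "x \<le> first_bessel_zero t0" shows "JJ (t0+1) x \<ge> 0"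
  using pos_before_zero(2)[of "JJ (t0+1)" "first_bessel_zero t0" x] assms
    cont_JJ[of "t0+1"] JJ_0 nozero_first[of t0] by auto

lemma cont_on_of_deriv:
  assumes "\<And>x. x \<in> S \<Longrightarrow> \<exists>D. DERIV f x :> D" shows "continuous_on S f"
  using assms by (meson DERIV_isCont continuous_at_imp_continuous_on)

lemma wnn: assumes t0: "t0 > 0" and x: "0 < x" "x < first_bessel_zero t0"
  shows "JJ (t0+2) x \<ge> 0"
proof -
  define c where "c = 1/(2*(t0+1))"
  define d where "d = 1/(2*(t0+2))"
  define R where "R = (\<lambda>s. s powr (2*t0+2) * JJ (t0+2) s)"
  have dR: "DERIV R s :> (2*t0+2) * s powr (2*t0+1) * JJ (t0+1) s" if s: "s > 0" for s
  proof -
    have "DERIV R s :> (2*t0+2) * s powr (2*t0+2-1) * JJ (t0+2) s + s powr (2*t0+2) * (-d * s * JJ (t0+3) s)"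
      unfolding R_def d_def
      using DERIV_mult[OF has_real_derivative_powr[OF s, of "2*t0+2"] dw[OF t0, of s]] by (simp add: mult_ac)
    moreover have "(2*t0+2) * s powr (2*t0+2-1) * JJ (t0+2) s + s powr (2*t0+2) * (-d * s * JJ (t0+3) s)
        = (2*t0+2) * s powr (2*t0+1) * JJ (t0+1) s"
    proof -
      have A: "s powr (2*t0+2) = s powr (2*t0+1) * s" using powr_add[of s "2*t0+1" 1] s by (simp add: add.commute)
      have cc: "c \<noteq> 0" "1/c = 2*t0+2" unfolding c_def using t0 by auto
      have U: "JJ (t0+1) s = JJ (t0+2) s - c*d * s^2*JJ (t0+3) s" using ct[OF t0, of s] unfolding c_def d_def by simp
      have e: "2*t0+2-1 = 2*t0+(1::real)" by simp
      show ?thesis using alg_R[OF cc(1) U A] unfolding cc(2) e by simp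
    qed
    ultimately show ?thesis by simp
  qed
  have mono: "R s \<le> R x" if "0 < s" "s < x" for s
  proof (rule DERIV_nonneg_imp_increasing_open[of s x R])
    show "s \<le> x" using that by simp
    show "\<exists>D. DERIV R y :> D \<and> D \<ge> 0" if "s < y" "y < x" for y
    proof -
      have "JJ (t0+1) y > 0" using upos[OF t0, of y] that \<open>0<s\<close> x by auto
      thus ?thesis using dR[of y] that \<open>0 < s\<close> t0 by (intro exI[of _ "(2*t0+2) * y powr (2*t0+1) * JJ (t0+1) y"]) auto
    qed
    show "continuous_on {s..x} R"
    proof (intro cont_on_of_deriv)
      fix y assume "y \<in> {s..x}"
      hence "y > 0" using \<open>0<s\<close> by auto
      thus "\<exists>D. DERIV R y :> D" using dR by blast
    qed
  qed
  have lim: "(R \<longlongrightarrow> 0) (at_right 0)" unfolding R_def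
    using t0 cont_JJ[of "t0+2"] by (intro lim_powr_mult) auto
  have ev: "eventually (\<lambda>s. R s \<le> R x) (at_right 0)"
    using eventually_at_right_real[OF x(1)] by eventually_elim (use mono in auto)
  have "0 \<le> R x"
    by (rule tendsto_le[OF trivial_limit_at_right_real tendsto_const lim ev])
  moreover have "x powr (2*t0+2) > 0" using x by simp
  ultimately show ?thesis unfolding R_def by (simp add: zero_le_mult_iff)
qed

lemma Nnp: assumes t0: "t0 > 0" and x: "0 < x" "x < first_bessel_zero t0"
  shows "(1 - 1/(2*(t0+1))) * JJ (t0+1) x * JJ (t0+2) x - (JJ (t0+1) x)^2
          - (1/(2*(t0+1)))^2 * x^2 * (JJ (t0+2) x)^2 \<le> 0"
proof -
  define c where "c = 1/(2*(t0+1))"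
  define d where "d = 1/(2*(t0+2))"
  define N where "N = (\<lambda>s. (1 - c) * JJ (t0+1) s * JJ (t0+2) s - (JJ (t0+1) s)^2
          - c^2 * s^2 * (JJ (t0+2) s)^2)"
  define K where "K = (\<lambda>s. s powr (2*t0+1) * N s)"
  have dN: "DERIV N s :> (1-c)*((-c * s * JJ (t0+2) s) * JJ (t0+2) s + JJ (t0+1) s * (-d * s * JJ (t0+3) s))
       - 2 * JJ (t0+1) s * (-c * s * JJ (t0+2) s)
       - c^2 * (2 * s * (JJ (t0+2) s)^2 + s^2 * (2 * JJ (t0+2) s * (-d * s * JJ (t0+3) s)))" for s
  proof -
    have du': "DERIV (JJ (t0+1)) s :> -c * s * JJ (t0+2) s" using du[OF t0, of s] unfolding c_def by simp
    have dw': "DERIV (JJ (t0+2)) s :> -d * s * JJ (t0+3) s" using dw[OF t0, of s] unfolding d_def by simp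
    show ?thesis unfolding N_def
      by (rule DERIV_cong, (rule derivative_eq_intros du' dw' | simp)+) (simp add: algebra_simps power2_eq_square)
  qed
  have dK: "DERIV K s :> -(1-c) * s powr (2*t0) * JJ (t0+1) s * JJ (t0+2) s" if s: "s > 0" for s
  proof -
    have "DERIV K s :> (2*t0+1) * s powr (2*t0+1-1) * N s + s powr (2*t0+1) *
       ((1-c)*((-c * s * JJ (t0+2) s) * JJ (t0+2) s + JJ (t0+1) s * (-d * s * JJ (t0+3) s))
       - 2 * JJ (t0+1) s * (-c * s * JJ (t0+2) s)
       - c^2 * (2 * s * (JJ (t0+2) s)^2 + s^2 * (2 * JJ (t0+2) s * (-d * s * JJ (t0+3) s))))"
      unfolding K_def by (rule DERIV_cong[OF DERIV_mult[OF has_real_derivative_powr[OF s, of "2*t0+1"] dN[of s]]]) (simp add: algebra_simps)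
    moreover have "(2*t0+1) * s powr (2*t0+1-1) * N s + s powr (2*t0+1) *
       ((1-c)*((-c * s * JJ (t0+2) s) * JJ (t0+2) s + JJ (t0+1) s * (-d * s * JJ (t0+3) s))
       - 2 * JJ (t0+1) s * (-c * s * JJ (t0+2) s)
       - c^2 * (2 * s * (JJ (t0+2) s)^2 + s^2 * (2 * JJ (t0+2) s * (-d * s * JJ (t0+3) s))))
       = -(1-c) * s powr (2*t0) * JJ (t0+1) s * JJ (t0+2) s"
    proof -
      have A: "s powr (2*t0+1) = s powr (2*t0) * s" using powr_add[of s "2*t0" 1] s by simp
      have cc: "c \<noteq> 0" "2*t0+1 = (1-c)/c" unfolding c_def using t0 by (auto simp: field_simps)
      have U: "JJ (t0+1) s = JJ (t0+2) s - c*d * s^2 * JJ (t0+3) s" using ct[OF t0, of s] unfolding c_def d_def by simp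
      have e: "2*t0+1-1 = 2*t0" by simp
      show ?thesis using alg_K[OF cc(1) U A cc(2)] unfolding e N_def by simp
    qed
    ultimately show ?thesis by simp
  qed
  have mono: "K x \<le> K s" if "0 < s" "s < x" for s
  proof (rule DERIV_nonpos_imp_decreasing_open[of s x K])
    show "s \<le> x" using that by simp
    show "\<exists>D. DERIV K y :> D \<and> D \<le> 0" if "s < y" "y < x" for y
    proof -
      have "JJ (t0+1) y > 0" using upos[OF t0, of y] that \<open>0<s\<close> x by auto
      moreover have "JJ (t0+2) y \<ge> 0" using wnn[OF t0, of y] that \<open>0<s\<close> x by auto
      moreover have "1 - c > 0" unfolding c_def using t0 by (simp add: field_simps)
      moreover have "y powr (2*t0) > 0" using that \<open>0<s\<close> by simp
      ultimately have "(1-c) * y powr (2*t0) * JJ (t0+1) y * JJ (t0+2) y \<ge> 0"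
        by (intro mult_nonneg_nonneg) auto
      hence "-(1-c) * y powr (2*t0) * JJ (t0+1) y * JJ (t0+2) y \<le> 0" by (simp only: mult_minus_left)
      moreover have "y > 0" using that \<open>0 < s\<close> by linarith
      ultimately show ?thesis using dK[of y] by blast
    qed
    show "continuous_on {s..x} K"
    proof (intro cont_on_of_deriv)
      fix y assume "y \<in> {s..x}"
      hence "y > 0" using \<open>0<s\<close> by auto
      thus "\<exists>D. DERIV K y :> D" using dK by blast
    qed
  qed
  have cN: "isCont N 0" using dN DERIV_isCont by blast
  have lim: "(K \<longlongrightarrow> 0) (at_right 0)" unfolding K_def
    using t0 cN by (intro lim_powr_mult) auto
  have ev: "eventually (\<lambda>s. K x \<le> K s) (at_right 0)"
    using eventually_at_right_real[OF x(1)] by eventually_elim (use mono in auto)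
  have "K x \<le> 0"
    by (rule tendsto_le[OF trivial_limit_at_right_real lim tendsto_const ev])
  moreover have "x powr (2*t0+1) > 0" using x by simp
  ultimately have "N x \<le> 0" unfolding K_def by (simp add: mult_le_0_iff)
  thus ?thesis unfolding N_def c_def .
qed



lemma rmono: assumes t0: "t0 > 0" and yx: "0 < y" "y \<le> x" "x < first_bessel_zero t0"
  shows "y * JJ (t0+2) y / JJ (t0+1) y \<le> x * JJ (t0+2) x / JJ (t0+1) x"
proof -
  define c where "c = 1/(2*(t0+1))"
  define d where "d = 1/(2*(t0+2))"
  define r where "r = (\<lambda>s. s * JJ (t0+2) s / JJ (t0+1) s)"
  have dr: "DERIV r s :> -((1-c) * JJ (t0+1) s * JJ (t0+2) s - (JJ (t0+1) s)^2
          - c^2 * s^2 * (JJ (t0+2) s)^2) / (c * (JJ (t0+1) s)^2)" if s: "0 < s" "s < first_bessel_zero t0" for s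
  proof -
    have us: "JJ (t0+1) s \<noteq> 0" using upos[OF t0, of s] s by auto
    have du': "DERIV (JJ (t0+1)) s :> -c * s * JJ (t0+2) s" using du[OF t0, of s] unfolding c_def by simp
    have dw': "DERIV (JJ (t0+2)) s :> -d * s * JJ (t0+3) s" using dw[OF t0, of s] unfolding d_def by simp
    have d1: "DERIV (\<lambda>s. s * JJ (t0+2) s) s :> 1 * JJ (t0+2) s + s * (-d * s * JJ (t0+3) s)"
      by (rule DERIV_cong[OF DERIV_mult[OF DERIV_ident dw']]) (simp add: algebra_simps)
    have "DERIV r s :> ((JJ (t0+2) s + s * (-d * s * JJ (t0+3) s)) * JJ (t0+1) s - s * JJ (t0+2) s * (-c * s * JJ (t0+2) s)) / (JJ (t0+1) s)^2"
      unfolding r_def by (rule DERIV_cong[OF DERIV_quotient[OF d1 du' us]]) (simp add: algebra_simps power2_eq_square)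
    moreover have cc: "c \<noteq> 0" unfolding c_def using t0 by simp
    moreover have U: "JJ (t0+1) s = JJ (t0+2) s - c*d * s^2 * JJ (t0+3) s" using ct[OF t0, of s] unfolding c_def d_def by simp
    ultimately show ?thesis using alg_r[OF cc us U] by simp
  qed
  show ?thesis
  proof -
    have "r y \<le> r x"
    proof (rule DERIV_nonneg_imp_increasing_open[of y x r])
      show "y \<le> x" using yx by simp
      show "\<exists>D. DERIV r s :> D \<and> D \<ge> 0" if "y < s" "s < x" for s
      proof -
        have s: "0 < s" "s < first_bessel_zero t0" using that yx by auto
        have N: "(1-c) * JJ (t0+1) s * JJ (t0+2) s - (JJ (t0+1) s)^2 - c^2 * s^2 * (JJ (t0+2) s)^2 \<le> 0"
          using Nnp[OF t0 s] unfolding c_def .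
        have "c * (JJ (t0+1) s)^2 \<ge> 0" unfolding c_def using t0 by simp
        hence "-((1-c) * JJ (t0+1) s * JJ (t0+2) s - (JJ (t0+1) s)^2
          - c^2 * s^2 * (JJ (t0+2) s)^2) / (c * (JJ (t0+1) s)^2) \<ge> 0"
          using N by (intro divide_nonneg_nonneg) auto
        thus ?thesis using dr[OF s] by blast
      qed
      show "continuous_on {y..x} r"
      proof (intro cont_on_of_deriv)
        fix s assume "s \<in> {y..x}"
        hence "0 < s" "s < first_bessel_zero t0" using yx by auto
        thus "\<exists>D. DERIV r s :> D" using dr by blast
      qed
    qed
    thus ?thesis unfolding r_def .
  qed
qed

lemma gcond: assumes t0: "t0 > 0" and yx: "0 < y" "y \<le> x" "x < first_bessel_zero t0"
  shows "(JJ (t0+1) x - (1/(2*(t0+1))) * x^2 * JJ (t0+2) x) * (y * JJ (t0+1) y)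
      \<le> (x * JJ (t0+1) x) * (JJ (t0+1) y - (1/(2*(t0+1))) * y^2 * JJ (t0+2) y)"
proof -
  define c where "c = 1/(2*(t0+1))"
  have c: "c > 0" unfolding c_def using t0 by simp
  have ux: "JJ (t0+1) x > 0" using upos[OF t0, of x] yx by auto
  have uy: "JJ (t0+1) y > 0" using upos[OF t0, of y] yx by auto
  have r: "y * JJ (t0+2) y / JJ (t0+1) y \<le> x * JJ (t0+2) x / JJ (t0+1) x" by (rule rmono[OF t0 yx])
  hence r': "y * JJ (t0+2) y * JJ (t0+1) x \<le> x * JJ (t0+2) x * JJ (t0+1) y"
    using ux uy by (simp add: divide_simps)
  have a1: "y * (JJ (t0+1) x * JJ (t0+1) y) \<le> x * (JJ (t0+1) x * JJ (t0+1) y)"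
    using yx ux uy by (intro mult_right_mono) auto
  have a2: "c * x * y * (y * JJ (t0+2) y * JJ (t0+1) x) \<le> c * x * y * (x * JJ (t0+2) x * JJ (t0+1) y)"
    using r' c yx by (intro mult_left_mono) auto
  have "(JJ (t0+1) x - c * x^2 * JJ (t0+2) x) * (y * JJ (t0+1) y)
      = y * (JJ (t0+1) x * JJ (t0+1) y) - c * x * y * (x * JJ (t0+2) x * JJ (t0+1) y)"
    by (simp add: algebra_simps power2_eq_square)
  also have "\<dots> \<le> x * (JJ (t0+1) x * JJ (t0+1) y) - c * x * y * (y * JJ (t0+2) y * JJ (t0+1) x)"
    using a1 a2 by linarith
  also have "\<dots> = (x * JJ (t0+1) x) * (JJ (t0+1) y - c * y^2 * JJ (t0+2) y)"
    by (simp add: algebra_simps power2_eq_square)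
  finally show ?thesis unfolding c_def .
qed



lemma mainlem: assumes t0: "t0 > 0" and ab: "0 \<le> a" "a < b" "b \<le> first_bessel_zero t0"
  shows "JJ t0 a - JJ t0 b \<ge> (b - a) * sqrt ((a * JJ (t0+1) a) * (b * JJ (t0+1) b)) / (2*t0)"
proof -
  define j where "j = first_bessel_zero t0"
  define c where "c = 1/(2*(t0+1))"
  define g where "g = (\<lambda>x. x * JJ (t0+1) x)"
  define gd where "gd = (\<lambda>x. JJ (t0+1) x - c * x^2 * JJ (t0+2) x)"
  define m where "m = (a+b)/2"
  define S where "S = (b-a)/2"
  have S: "S > 0" "m + S = b" "m - S = a" unfolding S_def m_def using ab by (auto simp: field_simps)
  have dg: "DERIV g x :> gd x" for x
  proof -
    have du': "DERIV (JJ (t0+1)) x :> -c * x * JJ (t0+2) x" using du[OF t0, of x] unfolding c_def by simp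
    show ?thesis unfolding g_def gd_def
      by (rule DERIV_cong[OF DERIV_mult[OF DERIV_ident du']]) (simp add: algebra_simps power2_eq_square)
  qed
  have gnn: "g x \<ge> 0" if "a \<le> x" "x \<le> b" for x
    unfolding g_def using unn[OF t0, of x] that ab by auto
  have dplus: "DERIV (\<lambda>s. h (m+s)) s :> D" if "DERIV h (m+s) :> D" for h D s
  proof -
    have "DERIV (\<lambda>s. m+s) s :> 1" by (auto intro!: derivative_eq_intros)
    from DERIV_chain2[where f=h and g="\<lambda>s. m+s" and x=s, OF that this] show ?thesis by simp
  qed
  have dminus: "DERIV (\<lambda>s. h (m-s)) s :> -D" if "DERIV h (m-s) :> D" for h D s
  proof -
    have "DERIV (\<lambda>s. m-s) s :> -1" by (auto intro!: derivative_eq_intros)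
    from DERIV_chain2[where f=h and g="\<lambda>s. m-s" and x=s, OF that this] show ?thesis by simp
  qed
  define P where "P = (\<lambda>s. g (m+s) * g (m-s))"
  have dP: "DERIV P s :> gd (m+s) * g (m-s) + g (m+s) * (- gd (m-s))" for s
    unfolding P_def by (rule DERIV_cong[OF DERIV_mult[OF dplus[of g _ s, OF dg] dminus[of g _ s, OF dg]]]) (simp add: algebra_simps)
  have Pmono: "P S \<le> P s" if "0 \<le> s" "s \<le> S" for s
  proof (rule DERIV_nonpos_imp_decreasing_open[of s S P])
    show "s \<le> S" using that by simp
    show "\<exists>D. DERIV P s' :> D \<and> D \<le> 0" if "s < s'" "s' < S" for s'
    proof -
      have yx: "0 < m - s'" "m - s' \<le> m + s'" "m + s' < first_bessel_zero t0"
        using that \<open>0 \<le> s\<close> ab S by linarith+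
      have "gd (m+s') * g (m-s') \<le> g (m+s') * gd (m-s')"
        using gcond[OF t0 yx] unfolding gd_def g_def c_def by simp
      hence "gd (m+s') * g (m-s') + g (m+s') * (- gd (m-s')) \<le> 0" by simp
      thus ?thesis using dP by blast
    qed
    show "continuous_on {s..S} P" using dP by (intro cont_on_of_deriv) blast
  qed
  define C where "C = sqrt (g a * g b) / (2*t0)"
  define F where "F = (\<lambda>s. JJ t0 (m-s) - JJ t0 (m+s) - 2 * s * C)"
  have df': "DERIV (JJ t0) x :> -(g x / (2*t0))" for x
    using df[OF t0, of x] unfolding g_def by (simp add: field_simps)
  have dF: "DERIV F s :> g (m-s) / (2*t0) + g (m+s) / (2*t0) - 2 * C" for s
  proof -
    have l: "DERIV (\<lambda>x. 2 * x * C) s :> 2 * C" by (auto intro!: derivative_eq_intros)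
    have "DERIV F s :> -(-(g (m-s) / (2*t0))) - (-(g (m+s) / (2*t0))) - 2 * C"
      unfolding F_def
      by (intro DERIV_diff dminus[of "JJ t0" _ s, OF df'] dplus[of "JJ t0" _ s, OF df'] l)
    thus ?thesis by simp
  qed
  have "F 0 \<le> F S"
  proof (rule DERIV_nonneg_imp_increasing_open[of 0 S F])
    show "0 \<le> S" using S by simp
    show "\<exists>D. DERIV F s :> D \<and> D \<ge> 0" if "0 < s" "s < S" for s
    proof -
      have r: "a \<le> m - s" "m - s \<le> b" "a \<le> m + s" "m + s \<le> b" using that S by auto
      have g1: "g (m-s) \<ge> 0" "g (m+s) \<ge> 0" using gnn r by auto
      have "P S = g a * g b" unfolding P_def using S by simp
      hence "sqrt (g a * g b) \<le> sqrt (P s)" using Pmono[of s] that by auto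
      also have "\<dots> \<le> (g (m+s) + g (m-s)) / 2" unfolding P_def by (rule arith_geo_mean_sqrt) (use g1 in auto)
      finally have "2 * C \<le> g (m-s) / (2*t0) + g (m+s) / (2*t0)"
        unfolding C_def using t0 by (simp add: field_simps)
      thus ?thesis using dF[of s] by (intro exI[of _ "g (m-s) / (2*t0) + g (m+s) / (2*t0) - 2 * C"]) auto
    qed
    show "continuous_on {0..S} F" using dF by (intro cont_on_of_deriv) blast
  qed
  hence "0 \<le> JJ t0 (m - S) - JJ t0 (m + S) - 2 * S * C" unfolding F_def by simp
  moreover have "2 * S * C = (b - a) * C" unfolding S_def by simp
  ultimately have "0 \<le> JJ t0 a - JJ t0 b - (b - a) * C" unfolding S(2,3) by linarith
  thus ?thesis unfolding C_def g_def by (simp add: field_simps)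
qed



theorem corollary2:
  fixes nu a b :: real
  assumes "nu > -1"
    and "a \<in> {0..first_bessel_zero (nu + 1)}"
    and "b \<in> {0..first_bessel_zero (nu + 1)}"
  shows "\<bar>normBessel nu a - normBessel nu b\<bar>
           \<ge> \<bar>a - b\<bar> * sqrt (deriv (normBessel nu) a * deriv (normBessel nu) b)"
proof -
  define t0 where "t0 = nu + 1"
  have t0: "t0 > 0" using assms(1) unfolding t0_def by simp
  have nb: "normBessel nu = JJ t0" unfolding t0_def by (rule ext) (rule normBessel_JJ)
  define g where "g = (\<lambda>x. x * JJ (t0+1) x)"
  have der: "deriv (JJ t0) x = -(g x / (2*t0))" for x
    using DERIV_imp_deriv[OF df[OF t0, of x]] unfolding g_def by (simp add: field_simps)
  have gnn: "g x \<ge> 0" if "x \<in> {0..first_bessel_zero t0}" for x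
    unfolding g_def using unn[OF t0, of x] that by auto
  have sq: "sqrt (deriv (JJ t0) a * deriv (JJ t0) b) = sqrt (g a * g b) / (2*t0)"
  proof -
    have "deriv (JJ t0) a * deriv (JJ t0) b = (g a * g b) / (2*t0)^2"
      unfolding der by (simp add: power2_eq_square field_simps)
    moreover have "sqrt ((2*t0)^2) = 2*t0" using t0 by (subst real_sqrt_abs) simp
    ultimately show ?thesis by (simp only: real_sqrt_divide)
  qed
  have ab: "a \<in> {0..first_bessel_zero t0}" "b \<in> {0..first_bessel_zero t0}" using assms(2,3) unfolding t0_def by auto
  have main: "\<bar>JJ t0 a - JJ t0 b\<bar> \<ge> \<bar>a - b\<bar> * (sqrt (g a * g b) / (2*t0))"
  proof (cases a b rule: linorder_cases)
    case less
    have "JJ t0 a - JJ t0 b \<ge> (b - a) * sqrt (g a * g b) / (2*t0)"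
      using mainlem[OF t0 _ less] ab unfolding g_def by auto
    thus ?thesis using less by (simp add: abs_if)
  next
    case equal thus ?thesis by simp
  next
    case greater
    have "JJ t0 b - JJ t0 a \<ge> (a - b) * sqrt (g b * g a) / (2*t0)"
      using mainlem[OF t0 _ greater] ab unfolding g_def by auto
    thus ?thesis using greater by (simp add: abs_if mult.commute)
  qed
  show ?thesis unfolding nb sq using main .
qed


end
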